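(* Let $n\geq 3$ be an odd integer and define $$\phi(x)=\frac{5}{4}\sin(x)+\sum_{k=2}^{n-1}\sin(kx)+\frac{2n-3}{4n}\sin(nx).$$ Then $\phi(x)\geq 0$ for all $x\in[0,\pi]$. *)

theory Defs
  imports "HOL-Analysis.Analysis"
begin

end

theory Submission
  imports Defs
begin

lemma sin_lb7: "(x::real) \<ge> 0 \<Longrightarrow> sin x \<ge> x - x^3/6 + x^5/120 - x^7/5040"
proof -
  have "\<bar>sin x - (\<Sum>m<7. sin_coeff m * x ^ m)\<bar> \<le> inverse (fact 7) * \<bar>x\<bar> ^ 7"
    by (rule Maclaurin_sin_bound)
  moreover assume "x \<ge> 0"
  ultimately show ?thesis
    by (simp add: sin_coeff_def lessThan_nat_numeral fact_numeral) (auto simp: abs_if split: if_splits)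
qed

lemma sin_ub9: "(x::real) \<ge> 0 \<Longrightarrow> sin x \<le> x - x^3/6 + x^5/120 - x^7/5040 + x^9/362880"
proof -
  have "\<bar>sin x - (\<Sum>m<9. sin_coeff m * x ^ m)\<bar> \<le> inverse (fact 9) * \<bar>x\<bar> ^ 9"
    by (rule Maclaurin_sin_bound)
  moreover assume "x \<ge> 0"
  ultimately show ?thesis
    by (simp add: sin_coeff_def lessThan_nat_numeral fact_numeral) (auto simp: abs_if split: if_splits)
qed

lemma sin_lb5: "(x::real) \<ge> 0 \<Longrightarrow> sin x \<ge> x - x^3/6 - x^5/120"
proof -
  have "\<bar>sin x - (\<Sum>m<5. sin_coeff m * x ^ m)\<bar> \<le> inverse (fact 5) * \<bar>x\<bar> ^ 5"
    by (rule Maclaurin_sin_bound)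
  moreover assume "x \<ge> 0"
  ultimately show ?thesis
    by (simp add: sin_coeff_def lessThan_nat_numeral fact_numeral) (auto simp: abs_if split: if_splits)
qed

lemma cos_bound: "\<bar>cos (x::real) - (\<Sum>m<n. cos_coeff m * x ^ m)\<bar> \<le> inverse (fact n) * \<bar>x\<bar> ^ n"
proof -
  obtain t where "cos x = (\<Sum>m<n. cos_coeff m * x ^ m) + (cos(t + 1/2 * real n * pi) / fact n) * x ^ n"
    using Maclaurin_cos_expansion by blast
  hence "\<bar>cos x - (\<Sum>m<n. cos_coeff m * x ^ m)\<bar> = \<bar>cos(t + 1/2 * real n * pi)\<bar> / fact n * \<bar>x\<bar> ^ n"
    by (simp add: abs_mult power_abs)
  also have "\<dots> \<le> 1 / fact n * \<bar>x\<bar> ^ n"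
    by (intro mult_right_mono divide_right_mono) auto
  finally show ?thesis by (simp add: divide_inverse)
qed

lemma cos_ub6: "cos (x::real) \<le> 1 - x^2/2 + x^4/24 + x^6/720"
proof -
  have "\<bar>cos x - (\<Sum>m<6. cos_coeff m * x ^ m)\<bar> \<le> inverse (fact 6) * \<bar>x\<bar> ^ 6"
    by (rule cos_bound)
  then show ?thesis
    by (simp add: cos_coeff_def lessThan_nat_numeral fact_numeral) (auto simp: abs_if split: if_splits)
qed

lemma cos_lb8: "cos (x::real) \<ge> 1 - x^2/2 + x^4/24 - x^6/720 - x^8/40320"
proof -
  have "\<bar>cos x - (\<Sum>m<8. cos_coeff m * x ^ m)\<bar> \<le> inverse (fact 8) * \<bar>x\<bar> ^ 8"
    by (rule cos_bound)
  then show ?thesis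
    by (simp add: cos_coeff_def lessThan_nat_numeral fact_numeral) (auto simp: abs_if split: if_splits)
qed

lemma tanb:
  fixes u :: real assumes "0 \<le> u" "u \<le> 2/5"
  shows "(u + u^3/3) * cos u \<le> sin u"
proof -
  have s: "sin u \<ge> u - u^3/6 + u^5/120 - u^7/5040" using sin_lb7 assms by simp
  have c: "cos u \<le> 1 - u^2/2 + u^4/24 + u^6/720" by (rule cos_ub6)
  have T: "u + u^3/3 \<ge> 0" using assms by simp
  have "(u + u^3/3) * cos u \<le> (u + u^3/3) * (1 - u^2/2 + u^4/24 + u^6/720)"
    using mult_left_mono[OF c T] .
  moreover have "(u - u^3/6 + u^5/120 - u^7/5040) - (u + u^3/3) * (1 - u^2/2 + u^4/24 + u^6/720)
     = u^5 * (2/15 - 13/840 * u^2 - u^4/2160)"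
    by (simp add: eval_nat_numeral field_simps)
  moreover have "u^2 \<le> 4/25" using power_mono[of u "2/5" 2] assms by (simp add: power_divide)
  moreover have "u^4 \<le> 16/625" using power_mono[of u "2/5" 4] assms by (simp add: power_divide)
  moreover have "u^5 \<ge> 0" using assms by simp
  moreover have "2/15 - 13/840 * u^2 - u^4/2160 \<ge> 0" using calculation(3,4) by linarith
  ultimately show ?thesis using s mult_nonneg_nonneg[of "u^5" "2/15 - 13/840 * u^2 - u^4/2160"]
    by linarith
qed

lemma poly_small:
  fixes p w :: real assumes "0 \<le> w" "w \<le> 12/5" "0 < p" "p \<le> 1/6"
  shows "0 \<le> (p*w + (p*w)^3/3) * (2 - (p*w)^2 + (1 - w^2/2 + w^4/24 - w^6/720 - w^8/40320))
             - 3*p*(w - w^3/6 + w^5/120 - w^7/5040 + w^9/362880)"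
proof -
  define z where "z = w^2"
  define q where "q = p^2"
  have id: "(p*w + (p*w)^3/3) * (2 - (p*w)^2 + (1 - w^2/2 + w^4/24 - w^6/720 - w^8/40320))
             - 3*p*(w - w^3/6 + w^5/120 - w^7/5040 + w^9/362880)
     = p * w^5 * (1/60 - z/1260 - z^2/30240 - q^2/3 - q/6 + q*z/72 - q*z^2/2160 - q*z^3/120960)"
    unfolding z_def q_def by (simp add: eval_nat_numeral field_simps)
  have z0: "0 \<le> z" unfolding z_def by simp
  have z1: "z \<le> 144/25" using power_mono[of w "12/5" 2] assms unfolding z_def by (simp add: power_divide)
  have q0: "0 \<le> q" unfolding q_def by simp
  have q1: "q \<le> 1/36" using power_mono[of p "1/6" 2] assms unfolding q_def by (simp add: power_divide)
  have z2: "z^2 \<le> (144/25)^2" using z0 z1 by (intro power_mono) auto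
  have z3: "z^3 \<le> (144/25)^3" using z0 z1 by (intro power_mono) auto
  have q2: "q^2 \<le> (1/36)^2" using q0 q1 by (intro power_mono) auto
  have a1: "q*z^2 \<le> (1/36)*(144/25)^2" using q0 q1 z2 z0 by (intro mult_mono) auto
  have a2: "q*z^3 \<le> (1/36)*(144/25)^3" using q0 q1 z3 z0 by (intro mult_mono) auto
  have a3: "q*z \<ge> 0" using q0 z0 by simp
  have R: "0 \<le> 1/60 - z/1260 - z^2/30240 - q^2/3 - q/6 + q*z/72 - q*z^2/2160 - q*z^3/120960"
    using z1 z2 q1 q2 a1 a2 a3 by (simp add: power_divide)
  show ?thesis unfolding id using R assms by simp
qed

lemma core_small:
  fixes u N :: real assumes N: "N \<ge> 3" and u: "0 \<le> u" "u \<le> pi/2" and sm: "2*N*u \<le> 12/5"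
  shows "0 \<le> sin u * (cos u ^ 2 + 2 * cos (N*u) ^ 2) - 3/(2*N) * cos u * sin (2*N*u)"
proof -
  define w where "w = 2*N*u"
  define p where "p = 1/(2*N)"
  have p0: "0 < p" and p1: "p \<le> 1/6" using N unfolding p_def by (auto simp: field_simps)
  have uw: "u = p*w" unfolding p_def w_def using N by (simp add: field_simps)
  have w0: "0 \<le> w" unfolding w_def using N u by simp
  have w1: "w \<le> 12/5" unfolding w_def using sm .
  have u25: "u \<le> 2/5" using uw w1 p1 p0 w0 mult_mono[of p "1/6" w "12/5"] by simp
  define T where "T = u + u^3/3"
  define X where "X = cos u ^ 2 + 2 * cos (N*u) ^ 2"
  define C where "C = 1 - w^2/2 + w^4/24 - w^6/720 - w^8/40320"
  define S where "S = w - w^3/6 + w^5/120 - w^7/5040 + w^9/362880"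
  define Y where "Y = 2 - u^2 + C"
  have coef: "3/(2*N) = 3*p" unfolding p_def by simp
  have sw: "sin (2*N*u) = sin w" unfolding w_def ..
  have cN: "2 * cos (N*u) ^ 2 = 1 + cos w"
    using cos_double_cos[of "N*u"] unfolding w_def by (simp add: mult.assoc)
  have cu0: "0 \<le> cos u" using u by (intro cos_ge_zero) auto
  have su0: "0 \<le> sin u" using u by (intro sin_ge_zero) auto
  have T0: "0 \<le> T" unfolding T_def using u by simp
  have X0: "0 \<le> X" unfolding X_def by simp
  have sT: "T * cos u \<le> sin u" unfolding T_def using tanb u u25 by simp
  have sule: "sin u \<le> u" using sin_x_le_x u by simp
  have "sin u ^ 2 \<le> u ^ 2" using sule su0 by (intro power_mono) auto
  hence cu2: "cos u ^ 2 \<ge> 1 - u^2" using sin_cos_squared_add[of u] by linarith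
  have cw: "cos w \<ge> C" unfolding C_def by (rule cos_lb8)
  have sS: "sin w \<le> S" unfolding S_def using sin_ub9 w0 by simp
  have XY: "X \<ge> Y" unfolding X_def Y_def using cu2 cw cN by linarith
  have A: "0 \<le> (sin u - T * cos u) * X" using sT X0 by simp
  have B: "0 \<le> cos u * (T * (X - Y))" using cu0 T0 XY by simp
  have Cc: "0 \<le> cos u * (3*p*(S - sin w))" using cu0 p0 sS by simp
  have P: "0 \<le> T * Y - 3*p*S"
    using poly_small[OF w0 w1 p0 p1] unfolding T_def Y_def C_def S_def uw by simp
  have D: "0 \<le> cos u * (T * Y - 3*p*S)" using cu0 P by simp
  have eq: "sin u * X - 3*p * cos u * sin w
      = (sin u - T * cos u) * X + cos u * (T * (X - Y)) + cos u * (3*p*(S - sin w)) + cos u * (T * Y - 3*p*S)"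
    by (simp add: algebra_simps)
  show ?thesis unfolding coef sw X_def[symmetric] using eq A B Cc D by linarith
qed

lemma core_big:
  fixes u N :: real assumes N: "N \<ge> 3" and u: "0 \<le> u" "u \<le> pi/2" and bg: "2*N*u > 12/5"
  shows "0 \<le> sin u * (cos u ^ 2 + 2 * cos (N*u) ^ 2) - 3/(2*N) * cos u * sin (2*N*u)"
proof -
  define a where "a = 6/(5*N)"
  have a0: "0 < a" and a1: "a \<le> 2/5" using N unfolding a_def by (auto simp: field_simps)
  have au: "a < u" using bg N unfolding a_def by (simp add: field_simps)
  have pi2: "2/5 < pi/2" using pi_ge_two by simp
  have "sin a \<le> sin u" using a0 au u by (intro sin_monotone_2pi_le) auto
  moreover have "sin a \<ge> a - a^3/6 - a^5/120" using sin_lb5 a0 by simp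
  moreover have "a^2 \<le> 4/25" using power_mono[of a "2/5" 2] a0 a1 by (simp add: power_divide)
  moreover have "a^4 \<le> 16/625" using power_mono[of a "2/5" 4] a0 a1 by (simp add: power_divide)
  ultimately have h: "sin a \<le> sin u" "sin a \<ge> a - a^3/6 - a^5/120" "a^2 \<le> 4/25" "a^4 \<le> 16/625"
    by auto
  have "a * a^2 \<le> a * (4/25)" by (rule mult_left_mono[OF h(3)]) (use a0 in simp)
  moreover have "a^3 = a * a^2" by (simp add: eval_nat_numeral)
  ultimately have a3: "a^3 \<le> a * (4/25)" by simp
  have "a * a^4 \<le> a * (16/625)" by (rule mult_left_mono[OF h(4)]) (use a0 in simp)
  moreover have "a^5 = a * a^4" by (simp add: eval_nat_numeral)
  ultimately have a5: "a^5 \<le> a * (16/625)" by simp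
  have "sin u \<ge> a * (1 - 4/25/6 - 16/625/120)"
    using h(1,2) a3 a5 by (simp add: algebra_simps)
  hence "N * sin u \<ge> N * (a * (1 - 4/25/6 - 16/625/120))" using N by (intro mult_left_mono) auto
  also have "N * (a * (1 - 4/25/6 - 16/625/120)) = 6/5 * (1 - 4/25/6 - 16/625/120)"
    unfolding a_def using N by simp
  finally have Ns: "N * sin u \<ge> 7/6" by simp
  hence "(7/6)^2 \<le> (N * sin u)^2" by (intro power_mono) auto
  hence key: "8 * N^2 * sin u ^ 2 \<ge> 9" by (simp add: power_mult_distrib power_divide)
  define su where "su = sin u"
  define cu where "cu = cos u"
  define sv where "sv = sin (N*u)"
  define cv where "cv = cos (N*u)"
  have su0: "0 < su" unfolding su_def using au a0 u pi_ge_two by (intro sin_gt_zero) auto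
  have s2: "sin (2*N*u) = 2 * sv * cv" unfolding sv_def cv_def using sin_double[of "N*u"] by (simp add: mult.assoc)
  have one: "sv^2 + cv^2 = 1" unfolding sv_def cv_def by simp
  define \<alpha> where "\<alpha> = su * cu^2"
  define \<beta> where "\<beta> = 3/N * cu"
  define \<gamma> where "\<gamma> = su * cu^2 + 2 * su"
  have g0: "0 < \<gamma>" unfolding \<gamma>_def using su0 by (simp add: add_nonneg_pos)
  have F: "sin u * (cos u ^ 2 + 2 * cos (N*u) ^ 2) - 3/(2*N) * cos u * sin (2*N*u)
      = \<alpha> * sv^2 + \<gamma> * cv^2 - \<beta> * sv * cv"
  proof -
    have e: "su * cu\<^sup>2 = su * (cu\<^sup>2 * cv\<^sup>2) + su * (cu\<^sup>2 * sv\<^sup>2)"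
    proof -
      have "su * cu\<^sup>2 = su * (cu\<^sup>2 * (cv\<^sup>2 + sv\<^sup>2))" using one by (simp add: add.commute)
      thus ?thesis by (simp add: distrib_left)
    qed
    show ?thesis unfolding s2 su_def[symmetric] cu_def[symmetric] cv_def[symmetric] \<alpha>_def \<beta>_def \<gamma>_def
      using N by (simp add: field_simps) (simp add: e distrib_left)
  qed
  have ag: "\<alpha> * \<gamma> - \<beta>^2/4 = su^2 * cu^4 + cu^2 * (2 * su^2 - 9/(4*N^2))"
    unfolding \<alpha>_def \<beta>_def \<gamma>_def using N by (simp add: field_simps eval_nat_numeral)
  have "2 * su^2 - 9/(4*N^2) \<ge> 0" using key N unfolding su_def by (simp add: field_simps)
  hence ag0: "\<alpha> * \<gamma> - \<beta>^2/4 \<ge> 0" unfolding ag by simp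
  have "\<gamma> * (\<alpha> * sv^2 + \<gamma> * cv^2 - \<beta> * sv * cv) = (\<gamma> * cv - \<beta> * sv / 2)^2 + (\<alpha> * \<gamma> - \<beta>^2/4) * sv^2"
    by (simp add: field_simps eval_nat_numeral)
  also have "\<dots> \<ge> 0" using ag0 by simp
  finally have "0 \<le> \<gamma> * (\<alpha> * sv^2 + \<gamma> * cv^2 - \<beta> * sv * cv)" .
  hence "0 \<le> \<alpha> * sv^2 + \<gamma> * cv^2 - \<beta> * sv * cv" using g0 by (simp add: zero_le_mult_iff)
  thus ?thesis unfolding F .
qed

lemma core:
  fixes u N :: real assumes N: "N \<ge> 3" and u: "0 \<le> u" "u \<le> pi/2"
  shows "0 \<le> sin u * (cos u ^ 2 + 2 * cos (N*u) ^ 2) - 3/(2*N) * cos u * sin (2*N*u)"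
  using core_small[OF N u] core_big[OF N u] by linarith

lemma sum_sin:
  fixes x :: real
  shows "2 * sin (x/2) * (\<Sum>k=1..m. sin (real k * x)) = cos (x/2) - cos ((real m + 1/2) * x)"
proof (induction m)
  case 0
  then show ?case by simp
next
  case (Suc m)
  have a: "(real m + 1/2) * x = (real m + 1) * x - x/2" by (simp add: algebra_simps)
  have b: "(real (Suc m) + 1/2) * x = (real m + 1) * x + x/2" by (simp add: algebra_simps)
  have "2 * sin (x/2) * (\<Sum>k=1..Suc m. sin (real k * x))
      = 2 * sin (x/2) * (\<Sum>k=1..m. sin (real k * x)) + 2 * sin (x/2) * sin ((real m + 1) * x)"
    by (simp add: algebra_simps)
  also have "\<dots> = cos (x/2) - cos ((real (Suc m) + 1/2) * x)"
    unfolding Suc.IH a b cos_diff cos_add by (simp add: algebra_simps)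
  finally show ?case .
qed

theorem lemma1:
  fixes n :: nat and x :: real
  assumes "odd n" and "n \<ge> 3" and "0 \<le> x" and "x \<le> pi"
  shows "5/4 * sin x + (\<Sum>k=2..n-1. sin (real k * x))
           + (2 * real n - 3) / (4 * real n) * sin (real n * x) \<ge> 0"
proof (cases "x = 0")
  case True
  then show ?thesis by simp
next
  case False
  hence x0: "0 < x" using assms by simp
  define N where "N = real n"
  define u where "u = (pi - x)/2"
  have u0: "0 \<le> u" "u \<le> pi/2" using assms x0 by (auto simp: u_def)
  have xu: "x = pi - 2*u" by (simp add: u_def field_simps)
  have N3: "N \<ge> 3" using assms by (simp add: N_def)
  define F where "F = sin u * (cos u ^ 2 + 2 * cos (N*u) ^ 2) - 3/(2*N) * cos u * sin (2*N*u)"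
  have Fpos: "0 \<le> F" unfolding F_def using core[OF N3 u0] .
  have spos: "0 < sin (x/2)" using x0 assms by (intro sin_gt_zero) auto
  define S1 where "S1 = (\<Sum>k=1..n-1. sin (real k * x))"
  define S2 where "S2 = (\<Sum>k=2..n-1. sin (real k * x))"
  have s12: "S1 = sin x + S2" unfolding S1_def S2_def
    using sum.atLeast_Suc_atMost[of 1 "n-1" "\<lambda>k. sin (real k * x)"] assms by (simp add: numeral_2_eq_2)
  have nr: "real (n-1) = N - 1" using assms by (simp add: N_def of_nat_diff)
  have cf: "2 * sin (x/2) * S1 = cos (x/2) - cos ((N - 1 + 1/2) * x)"
    unfolding S1_def using sum_sin[of x "n-1"] nr by simp
  have xh: "x/2 = pi/2 - u" unfolding xu by (simp add: field_simps)
  have h1: "sin (x/2) = cos u" unfolding xh by (simp add: sin_diff)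
  have h2: "cos (x/2) = sin u" unfolding xh by (simp add: cos_diff)
  have h3: "sin x = 2 * sin u * cos u" unfolding xu by (simp add: sin_double)
  have cnp: "cos (N * pi) = -1" unfolding N_def using assms by simp
  have snp: "sin (N * pi) = 0" unfolding N_def by simp
  have Nx: "N * x = N * pi - 2*N*u" unfolding xu by (simp add: algebra_simps)
  have h4: "sin (N * x) = sin (2*N*u)" unfolding Nx sin_diff cnp snp by simp
  have h5: "cos (N * x) = - cos (2*N*u)" unfolding Nx cos_diff cnp snp by simp
  have h6: "cos ((N - 1 + 1/2) * x) = cos (N*x) * cos (x/2) + sin (N*x) * sin (x/2)"
  proof -
    have "(N - 1 + 1/2) * x = N*x - x/2" by (simp add: algebra_simps)
    thus ?thesis by (simp add: cos_diff)
  qed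
  have h7: "cos (2*N*u) = 2 * cos (N*u)^2 - 1" using cos_double_cos[of "N*u"] by (simp add: mult.assoc)
  define \<phi> where "\<phi> = 5/4 * sin x + S2 + (2 * N - 3) / (4 * N) * sin (N * x)"
  have "2 * sin (x/2) * \<phi> = 1/2 * sin (x/2) * sin x + 2 * sin (x/2) * S1 + 2 * sin (x/2) * ((2 * N - 3) / (4 * N)) * sin (N * x)"
    unfolding \<phi>_def s12 by (simp add: algebra_simps)
  also have "\<dots> = F"
    unfolding cf unfolding h6 unfolding h4 h5 h1 h2 h3 h7 F_def using N3 by (simp add: field_simps power2_eq_square)
  finally have "2 * sin (x/2) * \<phi> = F" .
  hence "0 \<le> (2 * sin (x/2)) * \<phi>" using Fpos by simp
  moreover have "0 < 2 * sin (x/2)" using spos by simp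
  ultimately have "0 \<le> \<phi>" by (simp add: zero_le_mult_iff)
  thus ?thesis unfolding \<phi>_def S2_def N_def .
qed

end
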